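(* Let $m\ge1$ be an integer. Then $\big[N,\frac im\log L^m\big]=-i\mathbf1$ on $\ell^2_m\cap\mathrm D(N\log L^m)\cap\mathrm D(\log(L^m)N)$, and this subspace is infinite-dimensional.
   Context: $\ell^2=\ell^2(\mathbb N)$, $\mathbb N=\{0,1,\dots\}$, basis $(\xi_n)$; $N\xi_n=n\xi_n$ (self-adjoint, maximal domain); $L$ left shift ($L\xi_n=\xi_{n-1}$, $L\xi_0=0$). For a linear operator $A$, $\mathrm D(\log A)=\{f\in\bigcap_{k\ge0}\mathrm D(A^k):\lim_K\sum_{k=1}^K\frac1k(\mathbf1-A)^kf\text{ exists}\}$, $\log Af=-\sum_{k\ge1}\frac1k(\mathbf1-A)^kf$. $\ell^2_m=\{\varphi\in\ell^2:\lim_{k\to\infty}(\mathbf1-L^m)^k\varphi=0\}$. Commutators $[A,B]=AB-BA$ on $\mathrm D(AB)\cap\mathrm D(BA)$. *)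

theory Defs
  imports Complex_Main
begin

text \<open>Vectors of l2(N) are represented as sequences nat => complex (coefficients
  w.r.t. the standard basis xi_n).\<close>

definition l2 :: "(nat \<Rightarrow> complex) set" where
  "l2 = {f. summable (\<lambda>n. (cmod (f n))\<^sup>2)}"

definition l2norm :: "(nat \<Rightarrow> complex) \<Rightarrow> real" where
  "l2norm f = sqrt (\<Sum>n. (cmod (f n))\<^sup>2)"

definition smul :: "complex \<Rightarrow> (nat \<Rightarrow> complex) \<Rightarrow> (nat \<Rightarrow> complex)" where
  "smul c f = (\<lambda>n. c * f n)"

definition Nop :: "(nat \<Rightarrow> complex) \<Rightarrow> (nat \<Rightarrow> complex)" where
  "Nop f = (\<lambda>n. of_nat n * f n)"

definition domN :: "(nat \<Rightarrow> complex) set" where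
  "domN = {f \<in> l2. Nop f \<in> l2}"

text \<open>Powers of the left shift: L xi_n = xi_(n-1), L xi_0 = 0, so (L^m f) n = f (n+m).\<close>
definition Lpow :: "nat \<Rightarrow> (nat \<Rightarrow> complex) \<Rightarrow> (nat \<Rightarrow> complex)" where
  "Lpow m f = (\<lambda>n. f (n + m))"

definition oneMinusLpow :: "nat \<Rightarrow> (nat \<Rightarrow> complex) \<Rightarrow> (nat \<Rightarrow> complex)" where
  "oneMinusLpow m f = (\<lambda>n. f n - Lpow m f n)"

definition logPartial :: "nat \<Rightarrow> (nat \<Rightarrow> complex) \<Rightarrow> nat \<Rightarrow> (nat \<Rightarrow> complex)" where
  "logPartial m f K = (\<lambda>n. \<Sum>k=1..K. (1 / of_nat k) * ((oneMinusLpow m ^^ k) f) n)"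

text \<open>Convergence in l2: the partial sums converge in l2-norm to h.
  (Since L^m is bounded on l2, f in l2 already lies in all D((L^m)^k).)\<close>
definition logSeriesConv :: "nat \<Rightarrow> (nat \<Rightarrow> complex) \<Rightarrow> (nat \<Rightarrow> complex) \<Rightarrow> bool" where
  "logSeriesConv m f h \<longleftrightarrow> f \<in> l2 \<and> h \<in> l2 \<and>
     (\<lambda>K. l2norm (\<lambda>n. logPartial m f K n - h n)) \<longlonglongrightarrow> 0"

definition domLog :: "nat \<Rightarrow> (nat \<Rightarrow> complex) set" where
  "domLog m = {f. \<exists>h. logSeriesConv m f h}"

definition logL :: "nat \<Rightarrow> (nat \<Rightarrow> complex) \<Rightarrow> (nat \<Rightarrow> complex)" where
  "logL m f = (\<lambda>n. - (THE h. logSeriesConv m f h) n)"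

definition domNLog :: "nat \<Rightarrow> (nat \<Rightarrow> complex) set" where
  "domNLog m = {f \<in> domLog m. logL m f \<in> domN}"

definition domLogN :: "nat \<Rightarrow> (nat \<Rightarrow> complex) set" where
  "domLogN m = {f \<in> domN. Nop f \<in> domLog m}"

definition l2m :: "nat \<Rightarrow> (nat \<Rightarrow> complex) set" where
  "l2m m = {\<phi> \<in> l2. (\<lambda>k. l2norm ((oneMinusLpow m ^^ k) \<phi>)) \<longlonglongrightarrow> 0}"

end

theory Submission
  imports Defs
begin


lemma l2I: "summable (\<lambda>n. (cmod (f n))\<^sup>2) \<Longrightarrow> f \<in> l2" by (simp add: l2_def)
lemma l2D: "f \<in> l2 \<Longrightarrow> summable (\<lambda>n. (cmod (f n))\<^sup>2)" by (simp add: l2_def)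

lemma sq_ineq: "(cmod (a + b))\<^sup>2 \<le> 2 * (cmod a)\<^sup>2 + 2 * (cmod b)\<^sup>2"
proof -
  have "cmod (a+b) \<le> cmod a + cmod b" by (rule norm_triangle_ineq)
  hence "(cmod (a+b))\<^sup>2 \<le> (cmod a + cmod b)\<^sup>2" by (simp add: power_mono)
  also have "\<dots> \<le> 2 * (cmod a)\<^sup>2 + 2 * (cmod b)\<^sup>2"
  proof -
    have h: "0 \<le> (cmod a - cmod b)\<^sup>2" by simp
    show ?thesis using h unfolding power2_sum power2_diff by linarith
  qed
  finally show ?thesis .
qed

lemma l2_lin: assumes "f \<in> l2" "g \<in> l2" shows "(\<lambda>n. a * f n + b * g n) \<in> l2"
proof (rule l2I, rule summable_comparison_test)
  show "summable (\<lambda>n. 2 * (cmod a)\<^sup>2 * (cmod (f n))\<^sup>2 + 2 * (cmod b)\<^sup>2 * (cmod (g n))\<^sup>2)"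
    using l2D[OF assms(1)] l2D[OF assms(2)] by (intro summable_add summable_mult)
  have "norm ((cmod (a * f n + b * g n))\<^sup>2) \<le> 2 * (cmod a)\<^sup>2 * (cmod (f n))\<^sup>2 + 2 * (cmod b)\<^sup>2 * (cmod (g n))\<^sup>2" for n
    using sq_ineq[of "a * f n" "b * g n"] by (simp add: norm_mult power_mult_distrib)
  thus "\<exists>N. \<forall>n\<ge>N. norm ((cmod (a * f n + b * g n))\<^sup>2) \<le> 2 * (cmod a)\<^sup>2 * (cmod (f n))\<^sup>2 + 2 * (cmod b)\<^sup>2 * (cmod (g n))\<^sup>2"
    by blast
qed

lemma l2_zero: "(\<lambda>n. 0) \<in> l2" by (simp add: l2_def)

lemma l2_scale: assumes "f \<in> l2" shows "(\<lambda>n. a * f n) \<in> l2"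
  using l2_lin[OF assms l2_zero, of a 0] by simp

lemma l2_diff: assumes "f \<in> l2" "g \<in> l2" shows "(\<lambda>n. f n - g n) \<in> l2"
  using l2_lin[OF assms, of 1 "-1"] by simp

lemma l2_add: assumes "f \<in> l2" "g \<in> l2" shows "(\<lambda>n. f n + g n) \<in> l2"
  using l2_lin[OF assms, of 1 1] by simp

lemma l2_shift: assumes "f \<in> l2" shows "(\<lambda>n. f (n + m)) \<in> l2"
  using l2D[OF assms] by (intro l2I) (simp add: summable_iff_shift[of "\<lambda>n. (cmod (f n))\<^sup>2" m])

lemma l2_O: "f \<in> l2 \<Longrightarrow> oneMinusLpow m f \<in> l2"
  unfolding oneMinusLpow_def Lpow_def by (intro l2_diff l2_shift)

lemma l2_Opow: "f \<in> l2 \<Longrightarrow> (oneMinusLpow m ^^ k) f \<in> l2"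
  by (induction k) (auto intro: l2_O)

lemma l2_sum: "(\<And>k. k \<in> A \<Longrightarrow> g k \<in> l2) \<Longrightarrow> finite A \<Longrightarrow> (\<lambda>n. \<Sum>k\<in>A. g k n) \<in> l2"
proof (induction A rule: infinite_finite_induct)
  case (insert x F)
  have e: "(\<lambda>n. \<Sum>k\<in>insert x F. g k n) = (\<lambda>n. g x n + (\<Sum>k\<in>F. g k n))"
    using insert.hyps by simp
  have "g x \<in> l2" "(\<lambda>n. \<Sum>k\<in>F. g k n) \<in> l2" using insert by auto
  from l2_add[OF this] show ?case unfolding e .
qed (auto simp: l2_zero)

lemma l2_logPartial: assumes "f \<in> l2" shows "logPartial m f K \<in> l2"
  unfolding logPartial_def
proof (rule l2_sum)
  fix k show "(\<lambda>n. 1 / of_nat k * (oneMinusLpow m ^^ k) f n) \<in> l2"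
    using l2_scale[OF l2_Opow[OF assms], of "1/of_nat k"] by simp
qed simp

lemma coord_le: assumes "f \<in> l2" shows "cmod (f n) \<le> l2norm f"
proof -
  have "(cmod (f n))\<^sup>2 \<le> (\<Sum>n. (cmod (f n))\<^sup>2)"
    using sum_le_suminf[OF l2D[OF assms], of "{n}"] by simp
  hence "sqrt ((cmod (f n))\<^sup>2) \<le> l2norm f" unfolding l2norm_def by (rule real_sqrt_le_mono)
  thus ?thesis by simp
qed

lemma coord_tendsto: assumes "\<And>K. g K \<in> l2" "(\<lambda>K. l2norm (g K)) \<longlonglongrightarrow> 0"
  shows "(\<lambda>K. g K n) \<longlonglongrightarrow> 0"
proof (rule tendsto_norm_zero_cancel, rule real_tendsto_sandwich[OF _ _ tendsto_const assms(2)])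
  show "\<forall>\<^sub>F K in sequentially. norm (g K n) \<le> l2norm (g K)"
    using coord_le[OF assms(1)] by simp
qed simp

lemma l2norm_tendsto:
  assumes u: "u \<in> l2" and v: "v \<in> l2" and a: "a \<longlonglongrightarrow> 0" and b: "b \<longlonglongrightarrow> 0"
    and le: "\<And>K n. (cmod (g K n))\<^sup>2 \<le> a K * (cmod (u n))\<^sup>2 + b K * (cmod (v n))\<^sup>2"
  shows "(\<lambda>K. l2norm (g K)) \<longlonglongrightarrow> 0"
proof -
  define U where "U = (\<Sum>n. (cmod (u n))\<^sup>2)"
  define V where "V = (\<Sum>n. (cmod (v n))\<^sup>2)"
  have su: "summable (\<lambda>n. (cmod (u n))\<^sup>2)" and sv: "summable (\<lambda>n. (cmod (v n))\<^sup>2)"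
    using u v by (auto dest: l2D)
  have sR: "summable (\<lambda>n. a K * (cmod (u n))\<^sup>2 + b K * (cmod (v n))\<^sup>2)" for K
    using su sv by (intro summable_add summable_mult)
  have sg: "summable (\<lambda>n. (cmod (g K n))\<^sup>2)" for K
    by (rule summable_comparison_test[OF _ sR[of K]]) (use le in auto)
  have up: "(\<Sum>n. (cmod (g K n))\<^sup>2) \<le> a K * U + b K * V" for K
  proof -
    have "(\<Sum>n. (cmod (g K n))\<^sup>2) \<le> (\<Sum>n. a K * (cmod (u n))\<^sup>2 + b K * (cmod (v n))\<^sup>2)"
      by (rule suminf_le[OF le sg sR])
    also have "\<dots> = a K * U + b K * V"
      unfolding U_def V_def using su sv
      by (simp add: suminf_add[symmetric] suminf_mult summable_mult)
    finally show ?thesis .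
  qed
  have lim: "(\<lambda>K. a K * U + b K * V) \<longlonglongrightarrow> 0"
    using tendsto_add[OF tendsto_mult[OF a tendsto_const] tendsto_mult[OF b tendsto_const]] by simp
  have "(\<lambda>K. (\<Sum>n. (cmod (g K n))\<^sup>2)) \<longlonglongrightarrow> 0"
    by (rule tendsto_sandwich[OF _ _ tendsto_const lim]) (auto intro!: always_eventually suminf_nonneg sg up)
  hence "(\<lambda>K. sqrt (\<Sum>n. (cmod (g K n))\<^sup>2)) \<longlonglongrightarrow> sqrt 0" by (rule tendsto_real_sqrt)
  thus ?thesis by (simp add: l2norm_def)
qed

lemma logSeries_unique: assumes "logSeriesConv m f h1" "logSeriesConv m f h2" shows "h1 = h2"
proof
  fix n
  have "(\<lambda>K. logPartial m f K n - h n) \<longlonglongrightarrow> 0" if "logSeriesConv m f h" for h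
    using that unfolding logSeriesConv_def
    by (intro coord_tendsto[where g="\<lambda>K n. logPartial m f K n - h n"]) (auto intro: l2_diff l2_logPartial)
  from this[OF assms(1)] this[OF assms(2)]
  have "(\<lambda>K. logPartial m f K n) \<longlonglongrightarrow> h1 n" "(\<lambda>K. logPartial m f K n) \<longlonglongrightarrow> h2 n"
    by (auto simp: LIM_zero_iff)
  thus "h1 n = h2 n" by (rule LIMSEQ_unique)
qed

lemma logL_eq: "logSeriesConv m f h \<Longrightarrow> logL m f = (\<lambda>n. - h n)"
  unfolding logL_def using the_equality[of "logSeriesConv m f" h] logSeries_unique by metis



lemma O_lin: "oneMinusLpow m (\<lambda>n. a * f n + b * g n) = (\<lambda>n. a * oneMinusLpow m f n + b * oneMinusLpow m g n)"
  unfolding oneMinusLpow_def Lpow_def by (auto simp: algebra_simps)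

lemma comm_base: "Nop (oneMinusLpow m f) n - oneMinusLpow m (Nop f) n = of_nat m * (f n - oneMinusLpow m f n)"
  unfolding oneMinusLpow_def Lpow_def Nop_def by (simp add: algebra_simps)

lemma comm: "Nop ((oneMinusLpow m ^^ Suc j) f) n - (oneMinusLpow m ^^ Suc j) (Nop f) n
   = of_nat (Suc j * m) * ((oneMinusLpow m ^^ j) f n - (oneMinusLpow m ^^ Suc j) f n)"
proof (induction j arbitrary: n)
  case 0
  then show ?case using comm_base[of m f n] by simp
next
  case (Suc j)
  define OP where "OP = oneMinusLpow m"
  define g where "g = (OP ^^ Suc j) f"
  define h where "h = (OP ^^ j) f"
  define c :: complex where "c = of_nat (Suc j * m)"
  have IH: "(OP ^^ Suc j) (Nop f) = (\<lambda>n. 1 * Nop g n + c * (g n - h n))"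
  proof
    fix n show "(OP ^^ Suc j) (Nop f) n = 1 * Nop g n + c * (g n - h n)"
      using Suc.IH[of n] unfolding OP_def g_def h_def c_def by (simp add: algebra_simps)
  qed
  have Oh: "OP h = g" unfolding g_def h_def by simp
  have D: "OP (\<lambda>n. g n - h n) = (\<lambda>n. OP g n - OP h n)"
    using O_lin[of m 1 g "-1" h] unfolding OP_def by simp
  have "(OP ^^ Suc (Suc j)) (Nop f) = OP ((OP ^^ Suc j) (Nop f))" by simp
  also have "\<dots> = (\<lambda>n. 1 * OP (Nop g) n + c * OP (\<lambda>n. g n - h n) n)"
    unfolding IH unfolding OP_def by (rule O_lin)
  finally have E: "(OP ^^ Suc (Suc j)) (Nop f) n = OP (Nop g) n + c * (OP g n - g n)"
    unfolding D Oh by simp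
  have F: "Nop (OP g) n - OP (Nop g) n = of_nat m * (g n - OP g n)"
    unfolding OP_def by (rule comm_base)
  have G: "(OP ^^ Suc (Suc j)) f = OP g" "(OP ^^ Suc j) f = g" unfolding g_def by simp_all
  have "Nop ((OP ^^ Suc (Suc j)) f) n - (OP ^^ Suc (Suc j)) (Nop f) n
      = (of_nat m + c) * (g n - OP g n)"
    unfolding E G using F by (simp add: algebra_simps)
  also have "of_nat m + c = of_nat (Suc (Suc j) * m)" unfolding c_def by simp
  finally show ?case unfolding OP_def G[unfolded OP_def] .
qed

lemma telescope: "of_nat n * logPartial m f K n - logPartial m (Nop f) K n
   = of_nat m * (f n - (oneMinusLpow m ^^ K) f n)"
proof (induction K)
  case 0
  then show ?case by (simp add: logPartial_def)
next
  case (Suc K)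
  have S: "logPartial m g (Suc K) n = logPartial m g K n + (1 / of_nat (Suc K)) * (oneMinusLpow m ^^ Suc K) g n" for g
    unfolding logPartial_def by (simp add: sum.cl_ivl_Suc)
  have C: "of_nat n * (oneMinusLpow m ^^ Suc K) f n - (oneMinusLpow m ^^ Suc K) (Nop f) n
     = of_nat (Suc K * m) * ((oneMinusLpow m ^^ K) f n - (oneMinusLpow m ^^ Suc K) f n)"
    using comm[where m=m and j=K and f=f and n=n] by (simp add: Nop_def)
  have "of_nat n * logPartial m f (Suc K) n - logPartial m (Nop f) (Suc K) n
     = (of_nat n * logPartial m f K n - logPartial m (Nop f) K n)
       + (1 / of_nat (Suc K)) * (of_nat n * (oneMinusLpow m ^^ Suc K) f n - (oneMinusLpow m ^^ Suc K) (Nop f) n)"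
    unfolding S by (simp add: algebra_simps)
  also have "\<dots> = of_nat m * (f n - (oneMinusLpow m ^^ Suc K) f n)"
  proof -
    have nz: "(of_nat (Suc K) :: complex) \<noteq> 0" by (metis of_nat_eq_0_iff nat.distinct(1))
    show ?thesis unfolding Suc.IH C of_nat_mult using nz
      by (simp add: field_simps del: of_nat_Suc funpow.simps)
  qed
  finally show ?case .
qed

lemma coord_conv: "logSeriesConv m f h \<Longrightarrow> (\<lambda>K. logPartial m f K n) \<longlonglongrightarrow> h n"
proof -
  assume a: "logSeriesConv m f h"
  have "(\<lambda>K. logPartial m f K n - h n) \<longlonglongrightarrow> 0"
    using a unfolding logSeriesConv_def
    by (intro coord_tendsto[where g="\<lambda>K n. logPartial m f K n - h n"]) (auto intro: l2_diff l2_logPartial)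
  thus ?thesis by (simp add: LIM_zero_iff)
qed

lemma part1:
  assumes "m \<ge> 1" "f \<in> l2m m \<inter> domNLog m \<inter> domLogN m"
  shows "(\<lambda>n. Nop (smul (\<i> / of_nat m) (logL m f)) n - smul (\<i> / of_nat m) (logL m (Nop f)) n) = smul (- \<i>) f"
proof
  fix n
  from assms(2) obtain h where h: "logSeriesConv m f h" unfolding domNLog_def domLog_def by auto
  from assms(2) obtain h' where h': "logSeriesConv m (Nop f) h'" unfolding domLogN_def domLog_def by auto
  have fl: "f \<in> l2" and z: "(\<lambda>k. l2norm ((oneMinusLpow m ^^ k) f)) \<longlonglongrightarrow> 0"
    using assms(2) unfolding l2m_def by auto
  have Bz: "(\<lambda>K. (oneMinusLpow m ^^ K) f n) \<longlonglongrightarrow> 0"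
    by (rule coord_tendsto[where g="\<lambda>K. (oneMinusLpow m ^^ K) f"]) (use fl z l2_Opow in auto)
  have L1: "(\<lambda>K. of_nat n * logPartial m f K n - logPartial m (Nop f) K n) \<longlonglongrightarrow> of_nat n * h n - h' n"
    by (intro tendsto_intros coord_conv h h')
  have L2: "(\<lambda>K. of_nat n * logPartial m f K n - logPartial m (Nop f) K n) \<longlonglongrightarrow> of_nat m * (f n - 0)"
    unfolding telescope by (intro tendsto_intros Bz)
  have eq: "of_nat n * h n - h' n = of_nat m * f n" using LIMSEQ_unique[OF L1 L2] by simp
  have mz: "(of_nat m :: complex) \<noteq> 0" using assms(1) by simp
  have key: "of_nat n * (\<i> / of_nat m * - h n) - \<i> / of_nat m * - h' n = - \<i> * f n"
  proof -
    have "of_nat n * (\<i> / of_nat m * - h n) - \<i> / of_nat m * - h' n = - (\<i> / of_nat m) * (of_nat n * h n - h' n)"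
      by (simp add: algebra_simps)
    also have "\<dots> = - \<i> * f n" unfolding eq using mz by (simp add: field_simps)
    finally show ?thesis .
  qed
  show "Nop (smul (\<i> / of_nat m) (logL m f)) n - smul (\<i> / of_nat m) (logL m (Nop f)) n = smul (- \<i>) f n"
    unfolding logL_eq[OF h] logL_eq[OF h'] unfolding Nop_def smul_def using key by simp
qed



definition ez :: "real \<Rightarrow> nat \<Rightarrow> complex" where "ez z = (\<lambda>n. (complex_of_real z) ^ n)"

lemma reindex: "(\<Sum>k=1..K. F (k - 1)) = (\<Sum>k<K. F k :: 'a::comm_monoid_add)" for K :: nat
  by (induction K) (simp_all add: sum.cl_ivl_Suc)

lemma indep: "inj_on x {..<(d::nat)} \<Longrightarrow> (\<And>n. (\<Sum>j<d. c j * (x j :: complex) ^ n) = 0) \<Longrightarrow> \<forall>j<d. c j = 0"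
proof (induction d arbitrary: c)
  case 0 then show ?case by simp
next
  case (Suc d)
  define c' where "c' j = c j * (x j - x d)" for j
  have "(\<Sum>j<d. c' j * x j ^ n) = 0" for n
  proof -
    have "(\<Sum>j<d. c' j * x j ^ n) = (\<Sum>j<Suc d. c j * x j ^ Suc n) - x d * (\<Sum>j<Suc d. c j * x j ^ n)"
      unfolding c'_def by (simp add: sum_distrib_left sum_subtractf[symmetric] algebra_simps)
    also have "\<dots> = 0"
    proof -
      have A: "(\<Sum>j<Suc d. c j * x j ^ Suc n) = 0" by (rule Suc.prems(2))
      have B: "(\<Sum>j<Suc d. c j * x j ^ n) = 0" by (rule Suc.prems(2))
      show ?thesis unfolding A B by simp
    qed
    finally show ?thesis .
  qed
  moreover have "inj_on x {..<d}" using Suc.prems(1) by (rule inj_on_subset) auto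
  ultimately have "\<forall>j<d. c' j = 0" using Suc.IH by blast
  moreover have "x j \<noteq> x d" if "j < d" for j using Suc.prems(1) that by (auto dest: inj_onD)
  ultimately have cz: "\<forall>j<d. c j = 0" unfolding c'_def by auto
  have "(\<Sum>j<Suc d. c j * x j ^ 0) = 0" by (rule Suc.prems(2))
  hence "c d = 0" using cz by simp
  with cz show ?case using less_Suc_eq by auto
qed

context
  fixes m :: nat and z :: real
  assumes m: "m \<ge> 1" and z0: "0 < z" and z1: "z < 1"
begin

definition "w = (complex_of_real z) ^ m"
definition "t = 1 - w"
definition "e = ez z"

lemma zm: "0 < z ^ m" "z ^ m < 1"
  using z0 z1 m by (auto simp: power_less_one_iff)

lemma t_norm: "cmod t < 1"
proof -
  have "t = complex_of_real (1 - z ^ m)" unfolding t_def w_def by simp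
  hence "cmod t = \<bar>1 - z ^ m\<bar>" by (simp only: norm_of_real)
  thus ?thesis using zm by simp
qed

lemma w_nz: "w \<noteq> 0" unfolding w_def using z0 by simp
lemma one_t: "1 - t = w" unfolding t_def by simp

lemma e_l2: "e \<in> l2"
proof (rule l2I)
  have "(\<lambda>n. (cmod (e n))\<^sup>2) = (\<lambda>n. (z\<^sup>2) ^ n)"
    unfolding e_def ez_def using z0 by (auto simp: norm_power power_mult_distrib[symmetric] power_mult[symmetric] mult.commute)
  moreover have "summable (\<lambda>n. (z\<^sup>2) ^ n)" using z0 z1 by (intro summable_geometric) (simp add: abs_square_less_1)
  ultimately show "summable (\<lambda>n. (cmod (e n))\<^sup>2)" by simp
qed

lemma Ne_l2: "Nop e \<in> l2"
proof (rule l2I, rule summable_comparison_test_ev)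
  define y where "y = sqrt z"
  have y: "0 < y" "y < 1" "y * y = z" using z0 z1 unfolding y_def by auto
  have "(\<lambda>n. of_nat n * y ^ n) \<longlonglongrightarrow> 0" using y by (intro powser_times_n_limit_0) simp
  hence ev: "\<forall>\<^sub>F n in sequentially. norm (of_nat n * y ^ n) < 1"
    by (rule order_tendstoD(2)[OF tendsto_norm, simplified]) simp
  show "\<forall>\<^sub>F n in sequentially. norm ((cmod (Nop e n))\<^sup>2) \<le> z ^ n"
    using ev
  proof eventually_elim
    case (elim n)
    have a: "cmod (Nop e n) = (real n * y ^ n) * y ^ n"
      unfolding Nop_def e_def ez_def using z0 y
      by (simp add: norm_mult norm_power power_mult_distrib[symmetric] power_mult[symmetric] mult.commute)
    have b: "(real n * y ^ n)\<^sup>2 \<le> 1" using elim y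
      by (simp add: abs_square_le_1 less_imp_le)
    have "(cmod (Nop e n))\<^sup>2 = (real n * y ^ n)\<^sup>2 * (y\<^sup>2) ^ n"
      unfolding a by (simp add: power_mult_distrib power_mult[symmetric] mult.commute)
    also have "\<dots> \<le> 1 * (y\<^sup>2) ^ n" using b by (intro mult_right_mono) auto
    finally show ?case using y by (simp add: power2_eq_square)
  qed
  show "summable (\<lambda>n. z ^ n)" using z0 z1 by (intro summable_geometric) simp
qed

lemma O_e: "oneMinusLpow m (\<lambda>n. c * e n) = (\<lambda>n. (c * t) * e n)"
  unfolding oneMinusLpow_def Lpow_def e_def ez_def t_def w_def by (auto simp: power_add algebra_simps)

lemma O_Ne: "oneMinusLpow m (\<lambda>n. a * Nop e n + b * e n) = (\<lambda>n. (a * t) * Nop e n + (b * t - a * of_nat m * w) * e n)"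
  unfolding oneMinusLpow_def Lpow_def e_def ez_def t_def w_def Nop_def by (auto simp: power_add algebra_simps)

lemma Opow_e: "(oneMinusLpow m ^^ k) e = (\<lambda>n. t ^ k * e n)"
proof (induction k)
  case 0 then show ?case by simp
next
  case (Suc k) then show ?case using O_e[of "t^k"] by (simp add: algebra_simps)
qed

definition "bb k = - (of_nat k * of_nat m * w * t ^ (k - 1))"

lemma Opow_Ne: "(oneMinusLpow m ^^ k) (Nop e) = (\<lambda>n. t ^ k * Nop e n + bb k * e n)"
proof (induction k)
  case 0 then show ?case by (simp add: bb_def)
next
  case (Suc k)
  have "bb k * t - t ^ k * of_nat m * w = bb (Suc k)"
    by (cases k) (simp_all add: bb_def algebra_simps)
  then show ?case using Suc O_Ne[of "t^k" "bb k"] by (simp add: algebra_simps)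
qed

definition "sK K = (\<Sum>k=1..K. 1 / of_nat k * t ^ k)"
definition "gK K = (\<Sum>k<K. t ^ k)"
definition "S = suminf (\<lambda>k. 1 / of_nat (Suc k) * t ^ Suc k)"

lemma lp_e: "logPartial m e K n = sK K * e n"
  unfolding logPartial_def sK_def Opow_e sum_distrib_right by (simp add: ac_simps)

lemma lp_Ne: "logPartial m (Nop e) K n = sK K * Nop e n + (- of_nat m * w * gK K) * e n"
proof -
  have "logPartial m (Nop e) K n = (\<Sum>k=1..K. 1 / of_nat k * t ^ k * Nop e n + (- of_nat m * w) * t ^ (k - 1) * e n)"
    unfolding logPartial_def Opow_Ne
    by (rule sum.cong) (auto simp: bb_def field_simps)
  also have "\<dots> = sK K * Nop e n + (- of_nat m * w) * (\<Sum>k=1..K. t ^ (k - 1)) * e n"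
    unfolding sK_def by (simp add: sum.distrib sum_subtractf sum_negf sum_distrib_right sum_distrib_left algebra_simps)
  also have "(\<Sum>k=1..K. t ^ (k - 1)) = gK K" unfolding gK_def by (rule reindex)
  finally show ?thesis by simp
qed

lemma sK_lim: "sK \<longlonglongrightarrow> S"
proof -
  have sm: "summable (\<lambda>k. 1 / of_nat (Suc k) * t ^ Suc k)"
  proof (rule summable_comparison_test)
    have "norm (1 / of_nat (Suc n) * t ^ Suc n) \<le> cmod t ^ Suc n" for n
    proof -
      have "norm (1 / of_nat (Suc n) * t ^ Suc n) = (1 / real (Suc n)) * cmod t ^ Suc n"
        by (simp only: norm_mult norm_power norm_divide norm_one norm_of_nat)
      also have "\<dots> \<le> 1 * cmod t ^ Suc n" by (intro mult_right_mono) auto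
      finally show ?thesis by simp
    qed
    thus "\<exists>N. \<forall>n\<ge>N. norm (1 / of_nat (Suc n) * t ^ Suc n) \<le> cmod t ^ Suc n" by blast
    show "summable (\<lambda>n. cmod t ^ Suc n)" using summable_mult[OF summable_geometric[of "cmod t"], of "cmod t"] t_norm by simp
  qed
  have "sK K = (\<Sum>k<K. 1 / of_nat (Suc k) * t ^ Suc k)" for K
  proof -
    have "sK K = (\<Sum>k=1..K. (\<lambda>k. 1 / of_nat (Suc k) * t ^ Suc k) (k - 1))"
      unfolding sK_def by (rule sum.cong) auto
    also have "\<dots> = (\<Sum>k<K. 1 / of_nat (Suc k) * t ^ Suc k)"
      by (rule reindex[where K=K and F="\<lambda>k. 1 / of_nat (Suc k) * t ^ Suc k"])
    finally show ?thesis .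
  qed
  hence E: "sK = (\<lambda>K. \<Sum>k<K. 1 / of_nat (Suc k) * t ^ Suc k)" by (rule ext)
  show ?thesis unfolding E S_def by (rule summable_LIMSEQ[OF sm])
qed

lemma gK_lim: "gK \<longlonglongrightarrow> 1 / w"
  using geometric_sums[OF t_norm] unfolding sums_def gK_def one_t .

lemma e_conv: "logSeriesConv m e (\<lambda>n. S * e n)"
  unfolding logSeriesConv_def
proof (intro conjI)
  show "e \<in> l2" by (rule e_l2)
  show "(\<lambda>n. S * e n) \<in> l2" by (rule l2_scale[OF e_l2])
  show "(\<lambda>K. l2norm (\<lambda>n. logPartial m e K n - S * e n)) \<longlonglongrightarrow> 0"
  proof (rule l2norm_tendsto[OF e_l2 e_l2 _ tendsto_const[of 0]])
    show "(\<lambda>K. (cmod (sK K - S))\<^sup>2) \<longlonglongrightarrow> 0"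
      using tendsto_power[OF tendsto_norm[OF tendsto_diff[OF sK_lim tendsto_const[of S]]], of 2] by simp
    fix K n show "(cmod (logPartial m e K n - S * e n))\<^sup>2 \<le> (cmod (sK K - S))\<^sup>2 * (cmod (e n))\<^sup>2 + 0 * (cmod (e n))\<^sup>2"
      unfolding lp_e by (simp add: left_diff_distrib[symmetric] norm_mult power_mult_distrib)
  qed
qed

lemma Ne_conv: "logSeriesConv m (Nop e) (\<lambda>n. S * Nop e n + (- of_nat m) * e n)"
  unfolding logSeriesConv_def
proof (intro conjI)
  show "Nop e \<in> l2" by (rule Ne_l2)
  show "(\<lambda>n. S * Nop e n + (- of_nat m) * e n) \<in> l2" by (rule l2_lin[OF Ne_l2 e_l2])
  show "(\<lambda>K. l2norm (\<lambda>n. logPartial m (Nop e) K n - (S * Nop e n + (- of_nat m) * e n))) \<longlonglongrightarrow> 0"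
  proof (rule l2norm_tendsto[OF Ne_l2 e_l2])
    show "(\<lambda>K. 2 * (cmod (sK K - S))\<^sup>2) \<longlonglongrightarrow> 0"
      using tendsto_mult[OF tendsto_const[of 2] tendsto_power[OF tendsto_norm[OF tendsto_diff[OF sK_lim tendsto_const[of S]]], of 2]] by simp
    have "(\<lambda>K. of_nat m * (w * gK K - 1)) \<longlonglongrightarrow> of_nat m * (w * (1 / w) - 1)"
      by (intro tendsto_intros gK_lim)
    hence "(\<lambda>K. of_nat m * (w * gK K - 1)) \<longlonglongrightarrow> 0" using w_nz by simp
    from tendsto_mult[OF tendsto_const[of 2] tendsto_power[OF tendsto_norm[OF this], of 2]]
    show "(\<lambda>K. 2 * (cmod (of_nat m * (w * gK K - 1)))\<^sup>2) \<longlonglongrightarrow> 0" by simp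
    fix K n
    have "logPartial m (Nop e) K n - (S * Nop e n + (- of_nat m) * e n)
        = (sK K - S) * Nop e n + (- (of_nat m * (w * gK K - 1)) * e n)"
      unfolding lp_Ne by (simp add: algebra_simps)
    thus "(cmod (logPartial m (Nop e) K n - (S * Nop e n + (- of_nat m) * e n)))\<^sup>2
       \<le> 2 * (cmod (sK K - S))\<^sup>2 * (cmod (Nop e n))\<^sup>2 + 2 * (cmod (of_nat m * (w * gK K - 1)))\<^sup>2 * (cmod (e n))\<^sup>2"
      using sq_ineq[of "(sK K - S) * Nop e n" "- (of_nat m * (w * gK K - 1)) * e n"]
      by (simp add: norm_mult power_mult_distrib)
  qed
qed

lemma e_l2m: "e \<in> l2m m"
  unfolding l2m_def
proof (intro CollectI conjI e_l2)
  show "(\<lambda>k. l2norm ((oneMinusLpow m ^^ k) e)) \<longlonglongrightarrow> 0"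
    unfolding Opow_e
  proof (rule l2norm_tendsto[OF e_l2 e_l2 _ tendsto_const[of 0]])
    show "(\<lambda>K. (cmod t ^ K)\<^sup>2) \<longlonglongrightarrow> 0"
      using tendsto_power[OF LIMSEQ_power_zero[of "cmod t"], of 2] t_norm by simp
  qed (simp add: norm_mult norm_power power_mult_distrib)
qed

lemma e_all: "e \<in> l2m m \<inter> domNLog m \<inter> domLogN m"
proof (intro IntI e_l2m)
  have L: "logL m e = (\<lambda>n. (- S) * e n)" using logL_eq[OF e_conv] by simp
  show "e \<in> domNLog m" unfolding domNLog_def domLog_def domN_def
  proof (intro CollectI conjI)
    show "\<exists>h. logSeriesConv m e h" using e_conv by blast
    show "logL m e \<in> l2" unfolding L by (rule l2_scale[OF e_l2])
    have NL: "Nop (logL m e) = (\<lambda>n. (- S) * Nop e n)" unfolding L Nop_def by (simp add: algebra_simps)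
    from l2_scale[OF Ne_l2, of "-S"] show "Nop (logL m e) \<in> l2" unfolding NL .
  qed
  show "e \<in> domLogN m" unfolding domLogN_def domLog_def domN_def
    using e_l2 Ne_l2 Ne_conv by blast
qed

lemma ez_all: "ez z \<in> l2m m \<inter> domNLog m \<inter> domLogN m"
  using e_all unfolding e_def .

end


theorem mainTheorem16:
  fixes m :: nat
  assumes "m \<ge> 1"
  shows "(\<forall>f \<in> l2m m \<inter> domNLog m \<inter> domLogN m.
            (\<lambda>n. Nop (smul (\<i> / of_nat m) (logL m f)) n
                 - smul (\<i> / of_nat m) (logL m (Nop f)) n)
            = smul (- \<i>) f)
       \<and> (\<forall>d::nat. \<exists>fs :: nat \<Rightarrow> (nat \<Rightarrow> complex).
            (\<forall>j<d. fs j \<in> l2m m \<inter> domNLog m \<inter> domLogN m) \<and>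
            (\<forall>c :: nat \<Rightarrow> complex.
               (\<lambda>n. \<Sum>j<d. c j * fs j n) = (\<lambda>n. 0) \<longrightarrow> (\<forall>j<d. c j = 0)))"
proof (intro conjI ballI allI)
  fix f assume "f \<in> l2m m \<inter> domNLog m \<inter> domLogN m"
  then show "(\<lambda>n. Nop (smul (\<i> / of_nat m) (logL m f)) n
                 - smul (\<i> / of_nat m) (logL m (Nop f)) n) = smul (- \<i>) f"
    by (rule part1[OF assms])
next
  fix d :: nat
  define zz where "zz j = 1 / (real j + 2)" for j :: nat
  have zz: "0 < zz j" "zz j < 1" for j unfolding zz_def by auto
  have inj: "inj_on (\<lambda>j. complex_of_real (zz j)) {..<d}"
    by (rule inj_onI) (simp add: zz_def)
  show "\<exists>fs :: nat \<Rightarrow> (nat \<Rightarrow> complex).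
            (\<forall>j<d. fs j \<in> l2m m \<inter> domNLog m \<inter> domLogN m) \<and>
            (\<forall>c :: nat \<Rightarrow> complex.
               (\<lambda>n. \<Sum>j<d. c j * fs j n) = (\<lambda>n. 0) \<longrightarrow> (\<forall>j<d. c j = 0))"
  proof (intro exI[of _ "\<lambda>j. ez (zz j)"] conjI allI impI)
    fix j assume "j < d"
    show "ez (zz j) \<in> l2m m \<inter> domNLog m \<inter> domLogN m" by (rule ez_all[OF assms zz])
  next
    fix c :: "nat \<Rightarrow> complex" and j
    assume h: "(\<lambda>n. \<Sum>j<d. c j * ez (zz j) n) = (\<lambda>n. 0)" and jd: "j < d"
    have "(\<Sum>j<d. c j * complex_of_real (zz j) ^ n) = 0" for n
      using fun_cong[OF h, of n] by (simp add: ez_def)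
    hence "\<forall>j<d. c j = 0" by (rule indep[OF inj])
    thus "c j = 0" using jd by blast
  qed
qed

end
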